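(* Let $\sigma=\mathbb{L}(p_1,q_1;\dots;p_r,q_r)\in B_{P_r+Q_r}$ be a Lorenz braid. Index the rows of an $(P_r+Q_r)\times(P_r+Q_r)$ matrix by consecutive blocks of sizes $q_1,\dots,q_r,p_1,\dots,p_r$ (in this order) and its columns by consecutive blocks of sizes $p_1,q_1,p_2,q_2,\dots,p_r,q_r$ (in this order). Then $\beta_{P_r+Q_r}(\sigma)$ is the matrix whose blocks are as follows (with $P_0=0$): <ul> <li>for $1\le i\le r$, in the row block of size $q_i$: the block in column block $p_j$ is $t^{P_{j-1}}A_{q_i,p_j}$ if $j\le i$ and $0$ if $j>i$; the block in column block $q_j$ is $t^{P_i}I_{q_i}$ if $j=i$ and $0$ otherwise;</li> <li>for $1\le i\le r$, in the row block of size $p_i$: the block in column block $p_i$ is $I_{p_i}$, and all other blocks are $0$.</li> </ul> Here $A_{q,p}$ is the $q\times p$ matrix all of whose rows equal $(1-t)(1,t,t^2,\dots,t^{p-1})$. That is, \[ \beta_{P_r+Q_r}(\sigma)=\left(\begin{array}{cc|cc|c|cc} A_{q_1,p_1}&t^{P_1}I_{q_1}&0&0&\cdots&0&0\\ A_{q_2,p_1}&0&t^{P_1}A_{q_2,p_2}&t^{P_2}I_{q_2}&\cdots&0&0\\ \vdots&\vdots&\vdots&\vdots&&\vdots&\vdots\\ A_{q_r,p_1}&0&t^{P_1}A_{q_r,p_2}&0&\cdots&t^{P_{r-1}}A_{q_r,p_r}&t^{P_r}I_{q_r}\\\hline I_{p_1}&0&0&0&\cdots&0&0\\ 0&0&I_{p_2}&0&\cdots&0&0\\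 \vdots&\vdots&\vdots&\vdots&&\vdots&\vdots\\ 0&0&0&0&\cdots&I_{p_r}&0 \end{array}\right). \]
   Context: Braid group $B_n$: generators $\sigma_1,\dots,\sigma_{n-1}$ with the usual braid relations; $\sigma_i$ is the diagram in which the strand from the $i$-th top point to the $(i+1)$-th bottom point passes over the strand from the $(i+1)$-th top point to the $i$-th bottom point, and products correspond to stacking diagrams, the first factor on top. The Burau representation $\beta_n:B_n\to\mathrm{GL}_n(\mathbb{Z}[t,t^{-1}])$ is the homomorphism with $\beta_n(\sigma_j)=I_{j-1}\oplus\begin{pmatrix}1-t&t\\1&0\end{pmatrix}\oplus I_{n-j-1}$. Lorenz braid: given $r\ge1$ and positive integers $p_1,q_1,\dots,p_r,q_r$, set $P_j=p_1+\cdots+p_j$, $Q_j=q_1+\cdots+q_j$. $\mathbb{L}(p_1,q_1;\dots;p_r,q_r)$ is the braid on $P_r+Q_r$ strands defined by: the top row is split into a left part of $Q_r$ points and a right part of $P_r$ points; the bottom row is split, from left to right, into consecutive parts of sizes $p_1,q_1,p_2,q_2,\dots,p_r,q_r$ ($p$-parts and $q$-parts); the strands from the left top part are joined, in order, to the points of the $q$-parts, and the strands from the right top part are joined, in order, to the points of the $p$-parts (straight segments); at each crossing the strand from the left top part passes over the strand from the right top part, so the braid is positive. *)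

theory Defs
  imports "Jordan_Normal_Form.Matrix" "HOL-Computational_Algebra.Polynomial"
begin

text \<open>The variable t of the Burau representation.  All braids considered are
positive, so their Burau matrices have entries in Z[t], a subring of Z[t,t^-1];
we compute in int poly.\<close>
definition tt :: "int poly" where "tt = monom 1 1"

text \<open>Burau matrix of the generator sigma_j (j is 1-indexed, 1 <= j <= n-1);
matrix entries are 0-indexed as in Jordan_Normal_Form.\<close>
definition burau_gen :: "nat \<Rightarrow> nat \<Rightarrow> int poly mat" where
  "burau_gen n j = mat n n (\<lambda>(a,b).
     if a = j - 1 \<and> b = j - 1 then 1 - tt
     else if a = j - 1 \<and> b = j then tt
     else if a = j \<and> b = j - 1 then 1
     else if a = j \<and> b = j then 0
     else if a = b then 1 else 0)"

text \<open>Burau matrix of the positive braid word sigma_{j1} ... sigma_{jm}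
(first factor on top = leftmost factor).\<close>
definition burau_word :: "nat \<Rightarrow> nat list \<Rightarrow> int poly mat" where
  "burau_word n w = foldl (\<lambda>M j. M * burau_gen n j) (1\<^sub>m n) w"

definition swp :: "nat \<Rightarrow> nat \<Rightarrow> nat" where
  "swp j k = (if k = j then j + 1 else if k = j + 1 then j else k)"

text \<open>Bottom position of the strand starting at top position k.\<close>
definition word_perm :: "nat list \<Rightarrow> nat \<Rightarrow> nat" where
  "word_perm w k = foldl (\<lambda>x j. swp j x) k w"

definition psum :: "(nat \<Rightarrow> nat) \<Rightarrow> nat \<Rightarrow> nat" where
  "psum p j = (\<Sum>i = 1..j. p i)"

text \<open>Permutation underlying the Lorenz braid L(p_1,q_1;...;p_r,q_r):
top point k (1-indexed) is joined to bottom point lorenz_perm p q r k.\<close>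
definition lorenz_perm :: "(nat \<Rightarrow> nat) \<Rightarrow> (nat \<Rightarrow> nat) \<Rightarrow> nat \<Rightarrow> nat \<Rightarrow> nat" where
  "lorenz_perm p q r k =
     (if k \<le> psum q r then
        (let i = (LEAST i. k \<le> psum q i) in psum p i + k)
      else
        (let m = k - psum q r; i = (LEAST i. m \<le> psum p i) in psum q (i - 1) + m))"

text \<open>w is a positive braid word representing the Lorenz braid: a positive word
whose underlying permutation is the Lorenz permutation and in which every pair of
strands crosses at most once (length = number of inversions).  Since at each
crossing the strand moving right (coming from the left top part) is over, this is
exactly the positive permutation braid drawn in the definition.\<close>
definition is_lorenz_word :: "(nat \<Rightarrow> nat) \<Rightarrow> (nat \<Rightarrow> nat) \<Rightarrow> nat \<Rightarrow> nat list \<Rightarrow> bool" where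
  "is_lorenz_word p q r w \<longleftrightarrow>
     (let n = psum p r + psum q r in
       (\<forall>j\<in>set w. 1 \<le> j \<and> j < n) \<and>
       (\<forall>k\<in>{1..n}. word_perm w k = lorenz_perm p q r k) \<and>
       length w = card {(a, b). a \<in> {1..n} \<and> b \<in> {1..n} \<and> a < b \<and>
                                 lorenz_perm p q r b < lorenz_perm p q r a})"

end

theory Submission
  imports Defs
begin


lemma swp_inv[simp]: "swp j (swp j k) = k" by (simp add: swp_def)

lemma bij_swp: "bij (swp j)"
  by (metis bijI' swp_inv)

lemma swp_less: "\<not> (u = j \<and> v = Suc j) \<Longrightarrow> \<not> (u = Suc j \<and> v = j) \<Longrightarrow> (swp j u < swp j v) = (u < v)"
  by (auto simp: swp_def)

lemma swp_less_b1: "b \<noteq> j \<Longrightarrow> b \<noteq> Suc j \<Longrightarrow> (swp j u < b) = (u < b)"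
  by (auto simp: swp_def)
lemma swp_less_b2: "b \<noteq> j \<Longrightarrow> b \<noteq> Suc j \<Longrightarrow> (b < swp j u) = (b < u)"
  by (auto simp: swp_def)

lemma word_perm_snoc: "word_perm (w @ [j]) = swp j \<circ> word_perm w"
  by (rule ext) (simp add: word_perm_def)

lemma word_perm_Nil: "word_perm [] = id"
  by (rule ext) (simp add: word_perm_def)

lemma word_perm_inj: "inj (word_perm w)"
proof (induction w rule: rev_induct)
  case Nil then show ?case by (simp add: word_perm_Nil)
next
  case (snoc j w) then show ?case
    by (simp only: word_perm_snoc) (rule inj_compose[OF bij_is_inj[OF bij_swp]])
qed

lemma word_perm_range: "\<forall>j\<in>set w. 1 \<le> j \<and> j < n \<Longrightarrow> k \<in> {1..n} \<Longrightarrow> word_perm w k \<in> {1..n}"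
proof (induction w rule: rev_induct)
  case Nil then show ?case by (simp add: word_perm_Nil)
next
  case (snoc j w) then show ?case
    by (auto simp: word_perm_snoc swp_def)
qed

lemma word_perm_img: assumes "\<forall>j\<in>set w. 1 \<le> j \<and> j < n" shows "word_perm w ` {1..n} = {1..n}"
proof (rule endo_inj_surj)
  show "word_perm w ` {1..n} \<subseteq> {1..n}" using word_perm_range[OF assms] by blast
qed (auto intro: inj_on_subset[OF word_perm_inj])

lemma burau_word_snoc: "burau_word n (w @ [j]) = burau_word n w * burau_gen n j"
  by (simp add: burau_word_def)

lemma burau_gen_carrier: "burau_gen n j \<in> carrier_mat n n"
  by (simp add: burau_gen_def)

lemma burau_word_carrier: "burau_word n w \<in> carrier_mat n n"
proof (induction w rule: rev_induct)
  case Nil then show ?case by (simp add: burau_word_def)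
next
  case (snoc j w) then show ?case
    by (simp add: burau_word_snoc burau_gen_carrier mult_carrier_mat)
qed

lemma mult_gen_entry:
  assumes M: "M \<in> carrier_mat n n" and x: "x < n" and y: "y < n" and j: "1 \<le> j" "j < n"
  shows "(M * burau_gen n j) $$ (x,y) = (if y = j-1 then (1-tt) * M$$(x,j-1) + M$$(x,j)
           else if y = j then tt * M$$(x,j-1) else M$$(x,y))"
proof -
  have e: "(M * burau_gen n j) $$ (x,y) = (\<Sum>i\<in>{0..<n}. M$$(x,i) * burau_gen n j $$ (i,y))"
    using M x y by (simp add: scalar_prod_def burau_gen_def)
  show ?thesis
  proof (cases "y = j - 1")
    case True
    have "(\<Sum>i\<in>{0..<n}. M$$(x,i) * burau_gen n j $$ (i,y)) =
          (\<Sum>i\<in>{0..<n}. (if i = j - 1 then (1-tt) * M$$(x,j-1) else 0) + (if i = j then M$$(x,j) else 0))"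
      using True j y by (intro sum.cong) (auto simp: burau_gen_def)
    also have "\<dots> = (1-tt) * M$$(x,j-1) + M$$(x,j)"
      using j by (simp add: sum.distrib)
    finally show ?thesis using e True by simp
  next
    case F: False
    show ?thesis
    proof (cases "y = j")
      case True
      have "(\<Sum>i\<in>{0..<n}. M$$(x,i) * burau_gen n j $$ (i,y)) =
          (\<Sum>i\<in>{0..<n}. (if i = j - 1 then tt * M$$(x,j-1) else 0))"
        using True j y by (intro sum.cong) (auto simp: burau_gen_def mult.commute)
      also have "\<dots> = tt * M$$(x,j-1)"
        using j by simp
      finally show ?thesis using e True F by simp
    next
      case False
      have "(\<Sum>i\<in>{0..<n}. M$$(x,i) * burau_gen n j $$ (i,y)) =
          (\<Sum>i\<in>{0..<n}. (if i = y then M$$(x,y) else 0))"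
        using False F j y by (intro sum.cong) (auto simp: burau_gen_def)
      also have "\<dots> = M$$(x,y)"
        using y by simp
      finally show ?thesis using e False F by simp
    qed
  qed
qed


definition cnt :: "nat \<Rightarrow> (nat \<Rightarrow> nat) \<Rightarrow> nat \<Rightarrow> nat \<Rightarrow> nat" where
  "cnt n \<pi> a b = card {m \<in> {1..n}. a < m \<and> \<pi> m < b}"

definition Eb :: "nat \<Rightarrow> (nat \<Rightarrow> nat) \<Rightarrow> nat \<Rightarrow> nat \<Rightarrow> int poly" where
  "Eb n \<pi> a b = (if \<pi> a = b then tt ^ cnt n \<pi> a b
     else if (\<exists>m\<in>{1..n}. a < m \<and> \<pi> m = b \<and> b < \<pi> a) then (1 - tt) * tt ^ cnt n \<pi> a b else 0)"

definition Fm :: "nat \<Rightarrow> (nat \<Rightarrow> nat) \<Rightarrow> int poly mat" where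
  "Fm n \<pi> = mat n n (\<lambda>(x,y). Eb n \<pi> (x+1) (y+1))"

definition invs :: "nat \<Rightarrow> (nat \<Rightarrow> nat) \<Rightarrow> (nat \<times> nat) set" where
  "invs n \<pi> = {(a, b). a \<in> {1..n} \<and> b \<in> {1..n} \<and> a < b \<and> \<pi> b < \<pi> a}"

lemma Eb_alt:
  assumes "inj \<pi>" "B0 \<in> {1..n}"
  shows "Eb n \<pi> a (\<pi> B0) = (if a = B0 then tt ^ cnt n \<pi> a (\<pi> B0)
     else if a < B0 \<and> \<pi> B0 < \<pi> a then (1 - tt) * tt ^ cnt n \<pi> a (\<pi> B0) else 0)"
  using assms unfolding Eb_def by (auto simp: inj_eq)

lemma cnt_swp1: "b \<noteq> j \<Longrightarrow> b \<noteq> Suc j \<Longrightarrow> cnt n (swp j \<circ> \<pi>) a b = cnt n \<pi> a b"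
  unfolding cnt_def by (simp add: swp_less_b1)

lemma cnt_swp2: "cnt n (swp j \<circ> \<pi>) a j = cnt n \<pi> a j"
proof -
  have "\<And>k. (swp j k < j) = (k < j)" by (auto simp: swp_def)
  then show ?thesis unfolding cnt_def by simp
qed

lemma cnt_Suc:
  assumes "inj \<pi>" "A \<in> {1..n}" "\<pi> A = j"
  shows "cnt n \<pi> a (Suc j) = cnt n \<pi> a j + (if a < A then 1 else 0)"
proof -
  have fin: "finite {m \<in> {1..n}. a < m \<and> \<pi> m < j}" by simp
  have eq: "\<And>m. (\<pi> m = j) = (m = A)" using assms by (auto simp: inj_eq)
  show ?thesis
  proof (cases "a < A")
    case True
    have "{m \<in> {1..n}. a < m \<and> \<pi> m < Suc j} = insert A {m \<in> {1..n}. a < m \<and> \<pi> m < j}"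
      using True assms eq by (auto simp: less_Suc_eq)
    then show ?thesis using True fin assms unfolding cnt_def by simp
  next
    case False
    have "{m \<in> {1..n}. a < m \<and> \<pi> m < Suc j} = {m \<in> {1..n}. a < m \<and> \<pi> m < j}"
      using False assms eq by (auto simp: less_Suc_eq)
    then show ?thesis using False unfolding cnt_def by simp
  qed
qed

lemma swp_A: "swp j j = Suc j" and swp_B: "swp j (Suc j) = j"
  by (auto simp: swp_def)

lemma step_mat:
  assumes inj: "inj \<pi>" and rng: "\<pi> ` {1..n} = {1..n}" and j: "1 \<le> j" "j < n"
    and A: "A \<in> {1..n}" "\<pi> A = j" and B: "B \<in> {1..n}" "\<pi> B = Suc j" and AB: "A < B"
  shows "Fm n \<pi> * burau_gen n j = Fm n (swp j \<circ> \<pi>)"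
proof -
  define \<sigma> where "\<sigma> = swp j \<circ> \<pi>"
  have injs: "inj \<sigma>" unfolding \<sigma>_def using inj by (simp add: inj_compose bij_is_inj[OF bij_swp])
  have sA: "\<sigma> A = Suc j" and sB: "\<sigma> B = j" unfolding \<sigma>_def using A B by (auto simp: swp_def)
  have eqA: "\<And>m. (\<pi> m = j) = (m = A)" using inj A(2) by (metis injD)
  have eqB: "\<And>m. (\<pi> m = Suc j) = (m = B)" using inj B(2) by (metis injD)
  have Fc: "Fm n \<pi> \<in> carrier_mat n n" by (simp add: Fm_def)
  have E1: "Eb n \<sigma> a b = Eb n \<pi> a b" if b: "b \<in> {1..n}" "b \<noteq> j" "b \<noteq> Suc j" for a b
  proof -
    obtain B0 where B0: "B0 \<in> {1..n}" "\<pi> B0 = b" using b rng by (metis imageE)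
    have sB0: "\<sigma> B0 = b" using B0 b unfolding \<sigma>_def by (auto simp: swp_def)
    have c: "cnt n \<sigma> a b = cnt n \<pi> a b" unfolding \<sigma>_def using b cnt_swp1 by blast
    have l: "(b < \<sigma> a) = (b < \<pi> a)" unfolding \<sigma>_def using b by (simp add: swp_less_b2)
    have X: "Eb n \<sigma> a b = (if a = B0 then tt ^ cnt n \<sigma> a b
     else if a < B0 \<and> b < \<sigma> a then (1 - tt) * tt ^ cnt n \<sigma> a b else 0)"
      using Eb_alt[OF injs B0(1), of a] sB0 by simp
    have Y: "Eb n \<pi> a b = (if a = B0 then tt ^ cnt n \<pi> a b
     else if a < B0 \<and> b < \<pi> a then (1 - tt) * tt ^ cnt n \<pi> a b else 0)"
      using Eb_alt[OF inj B0(1), of a] B0 by simp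
    show ?thesis unfolding X Y c l ..
  qed
  have c0: "cnt n \<sigma> a j = cnt n \<pi> a j" for a unfolding \<sigma>_def by (rule cnt_swp2)
  have cS: "cnt n \<pi> a (Suc j) = cnt n \<pi> a j + (if a < A then 1 else 0)" for a
    using cnt_Suc[OF inj A] .
  have cS': "cnt n \<sigma> a (Suc j) = cnt n \<pi> a j + (if a < B then 1 else 0)" for a
    using cnt_Suc[OF injs B(1) sB, of a] c0 by simp
  have E2: "Eb n \<sigma> a (Suc j) = tt * Eb n \<pi> a j" for a
  proof -
    have L: "Eb n \<sigma> a (Suc j) = (if a = A then tt ^ cnt n \<sigma> a (Suc j)
     else if a < A \<and> Suc j < \<sigma> a then (1 - tt) * tt ^ cnt n \<sigma> a (Suc j) else 0)"
      using Eb_alt[OF injs A(1), of a] sA by simp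
    have R: "Eb n \<pi> a j = (if a = A then tt ^ cnt n \<pi> a j
     else if a < A \<and> j < \<pi> a then (1 - tt) * tt ^ cnt n \<pi> a j else 0)"
      using Eb_alt[OF inj A(1), of a] A by simp
    show ?thesis
    proof (cases "a = A")
      case True then show ?thesis using L R cS' AB by simp
    next
      case False
      show ?thesis
      proof (cases "a < A")
        case True
        have "\<pi> a \<noteq> j" "\<pi> a \<noteq> Suc j" using eqA eqB False True AB by auto
        then have "\<sigma> a = \<pi> a" unfolding \<sigma>_def by (simp add: swp_def)
        then show ?thesis using L R cS' AB True False \<open>\<pi> a \<noteq> Suc j\<close> \<open>\<pi> a \<noteq> j\<close>
          by (auto simp: algebra_simps)
      next
        case F2: False
        then show ?thesis using L R False by simp
      qed
    qed
  qed
  have E3: "Eb n \<sigma> a j = (1 - tt) * Eb n \<pi> a j + Eb n \<pi> a (Suc j)" for a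
  proof -
    have L: "Eb n \<sigma> a j = (if a = B then tt ^ cnt n \<pi> a j
     else if a < B \<and> j < \<sigma> a then (1 - tt) * tt ^ cnt n \<pi> a j else 0)"
      using Eb_alt[OF injs B(1), of a] sB c0 by simp
    have R1: "Eb n \<pi> a j = (if a = A then tt ^ cnt n \<pi> a j
     else if a < A \<and> j < \<pi> a then (1 - tt) * tt ^ cnt n \<pi> a j else 0)"
      using Eb_alt[OF inj A(1), of a] A by simp
    have R2: "Eb n \<pi> a (Suc j) = (if a = B then tt ^ cnt n \<pi> a (Suc j)
     else if a < B \<and> Suc j < \<pi> a then (1 - tt) * tt ^ cnt n \<pi> a (Suc j) else 0)"
      using Eb_alt[OF inj B(1), of a] B by simp
    show ?thesis
    proof (cases "a = B")
      case True then show ?thesis using L R1 R2 cS AB by simp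
    next
      case nB: False
      show ?thesis
      proof (cases "a = A")
        case True then show ?thesis using L R1 R2 cS AB sA A(2) by simp
      next
        case nA: False
        have "\<pi> a \<noteq> j" "\<pi> a \<noteq> Suc j" using eqA eqB nA nB by auto
        then have s: "\<sigma> a = \<pi> a" unfolding \<sigma>_def by (simp add: swp_def)
        show ?thesis
        proof (cases "Suc j < \<pi> a")
          case big: True
          show ?thesis
          proof (cases "a < A")
            case True
            have "(1 - tt) * tt ^ cnt n \<pi> a j = (1 - tt) * ((1 - tt) * tt ^ cnt n \<pi> a j) + (1 - tt) * tt ^ (cnt n \<pi> a j + 1)"
              by (simp add: algebra_simps)
            then show ?thesis using L R1 R2 cS AB s big True nA nB by simp
          next
            case False
            then show ?thesis using L R1 R2 cS AB s big nA nB by simp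
          qed
        next
          case False
          then have "\<not> j < \<pi> a" using \<open>\<pi> a \<noteq> Suc j\<close> by simp
          then show ?thesis using L R1 R2 s False nA nB by simp
        qed
      qed
    qed
  qed
  show ?thesis unfolding \<sigma>_def[symmetric]
  proof (rule eq_matI)
    fix x y assume x: "x < dim_row (Fm n \<sigma>)" and y: "y < dim_col (Fm n \<sigma>)"
    then have x: "x < n" and y: "y < n" by (auto simp: Fm_def)
    have "(Fm n \<pi> * burau_gen n j) $$ (x, y) = (if y = j-1 then (1-tt) * Fm n \<pi>$$(x,j-1) + Fm n \<pi>$$(x,j)
           else if y = j then tt * Fm n \<pi>$$(x,j-1) else Fm n \<pi>$$(x,y))"
      by (rule mult_gen_entry[OF Fc x y j])
    also have "\<dots> = Fm n \<sigma> $$ (x,y)"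
    proof -
      have jj: "j - 1 < n" "Suc (j - 1) = j" using j by auto
      show ?thesis
        using E1[of "Suc y" "Suc x"] E2[of "Suc x"] E3[of "Suc x"] x y j jj
        by (auto simp: Fm_def)
    qed
    finally show "(Fm n \<pi> * burau_gen n j) $$ (x, y) = Fm n \<sigma> $$ (x,y)" .
  qed (auto simp: Fm_def burau_gen_def)
qed


lemma invs_finite: "finite (invs n \<pi>)"
  by (rule finite_subset[of _ "{1..n} \<times> {1..n}"]) (auto simp: invs_def)

lemma invs_step:
  assumes inj: "inj \<pi>" and A: "A \<in> {1..n}" "\<pi> A = j" and B: "B \<in> {1..n}" "\<pi> B = Suc j"
  shows "A < B \<Longrightarrow> card (invs n (swp j \<circ> \<pi>)) = Suc (card (invs n \<pi>))"
    and "B < A \<Longrightarrow> Suc (card (invs n (swp j \<circ> \<pi>))) = card (invs n \<pi>)"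
proof -
  have eqA: "\<And>m. (\<pi> m = j) = (m = A)" using inj A(2) by (metis injD)
  have eqB: "\<And>m. (\<pi> m = Suc j) = (m = B)" using inj B(2) by (metis injD)
  have cmp: "(swp j (\<pi> y) < swp j (\<pi> x)) = (\<pi> y < \<pi> x)" if "\<not> (y = A \<and> x = B)" "\<not> (y = B \<and> x = A)" for x y
    using that eqA eqB by (intro swp_less) auto
  {
    assume AB: "A < B"
    have "invs n (swp j \<circ> \<pi>) = insert (A,B) (invs n \<pi>)"
    proof -
      have "z \<in> invs n (swp j \<circ> \<pi>) \<longleftrightarrow> z \<in> insert (A,B) (invs n \<pi>)" for z :: "nat \<times> nat"
      proof -
      obtain x y where z: "z = (x,y)" by (cases z)
      show ?thesis
      proof (cases "(x = A \<and> y = B) \<or> (x = B \<and> y = A)")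
        case True then show ?thesis using AB A B z by (auto simp: invs_def swp_A swp_B)
      next
        case False then show ?thesis using cmp[of y x] z by (auto simp: invs_def)
      qed
      qed
      then show ?thesis by blast
    qed
    moreover have "(A,B) \<notin> invs n \<pi>" using A B by (auto simp: invs_def)
    ultimately show "card (invs n (swp j \<circ> \<pi>)) = Suc (card (invs n \<pi>))"
      by (simp add: invs_finite)
  }
  {
    assume AB: "B < A"
    have "invs n \<pi> = insert (B,A) (invs n (swp j \<circ> \<pi>))"
    proof -
      have "z \<in> invs n \<pi> \<longleftrightarrow> z \<in> insert (B,A) (invs n (swp j \<circ> \<pi>))" for z :: "nat \<times> nat"
      proof -
      obtain x y where z: "z = (x,y)" by (cases z)
      show ?thesis
      proof (cases "(x = A \<and> y = B) \<or> (x = B \<and> y = A)")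
        case True then show ?thesis using AB A B z by (auto simp: invs_def swp_A swp_B)
      next
        case False then show ?thesis using cmp[of y x] z by (auto simp: invs_def)
      qed
      qed
      then show ?thesis by blast
    qed
    moreover have "(B,A) \<notin> invs n (swp j \<circ> \<pi>)" using A B by (auto simp: invs_def swp_def)
    ultimately show "Suc (card (invs n (swp j \<circ> \<pi>))) = card (invs n \<pi>)"
      by (simp add: invs_finite)
  }
qed

lemma Fm_id: "Fm n id = 1\<^sub>m n"
proof (rule eq_matI)
  fix x y assume "x < dim_row (1\<^sub>m n)" "y < dim_col (1\<^sub>m n)"
  show "Fm n id $$ (x, y) = 1\<^sub>m n $$ (x, y)"
  proof -
    have "\<And>a. cnt n id a a = 0" by (simp add: cnt_def card_eq_0_iff)
    then show ?thesis using \<open>x < dim_row (1\<^sub>m n)\<close> \<open>y < dim_col (1\<^sub>m n)\<close>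
      by (auto simp: Fm_def Eb_def)
  qed
qed (auto simp: Fm_def)

lemma main_gen:
  "\<forall>j\<in>set w. 1 \<le> j \<and> j < n \<Longrightarrow> card (invs n (word_perm w)) \<le> length w \<and>
     (card (invs n (word_perm w)) = length w \<longrightarrow> burau_word n w = Fm n (word_perm w))"
proof (induction w rule: rev_induct)
  case Nil
  have "invs n id = {}" by (auto simp: invs_def)
  then show ?case using Fm_id[of n] unfolding word_perm_Nil by (simp add: burau_word_def id_def)
next
  case (snoc j w)
  define \<pi> where "\<pi> = word_perm w"
  have ws: "\<forall>j\<in>set w. 1 \<le> j \<and> j < n" and j: "1 \<le> j" "j < n" using snoc.prems by auto
  have IH: "card (invs n \<pi>) \<le> length w" "card (invs n \<pi>) = length w \<Longrightarrow> burau_word n w = Fm n \<pi>"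
    using snoc.IH[OF ws] unfolding \<pi>_def by auto
  have inj: "inj \<pi>" unfolding \<pi>_def by (rule word_perm_inj)
  have rng: "\<pi> ` {1..n} = {1..n}" unfolding \<pi>_def by (rule word_perm_img[OF ws])
  obtain A where A: "A \<in> {1..n}" "\<pi> A = j" using j rng by (metis atLeastAtMost_iff imageE less_imp_le)
  obtain B where B: "B \<in> {1..n}" "\<pi> B = Suc j" using j rng by (metis atLeastAtMost_iff imageE le_SucI Suc_leI)
  have AB: "A \<noteq> B" using A B by auto
  have wp: "word_perm (w @ [j]) = swp j \<circ> \<pi>" unfolding \<pi>_def by (rule word_perm_snoc)
  show ?case
  proof (cases "A < B")
    case True
    have c: "card (invs n (swp j \<circ> \<pi>)) = Suc (card (invs n \<pi>))" by (rule invs_step(1)[OF inj A B True])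
    show ?thesis unfolding wp burau_word_snoc length_append_singleton
    proof (intro conjI impI)
      show "card (invs n (swp j \<circ> \<pi>)) \<le> Suc (length w)" using IH(1) c by linarith
      assume "card (invs n (swp j \<circ> \<pi>)) = Suc (length w)"
      then have "card (invs n \<pi>) = length w" using c by linarith
      then show "burau_word n w * burau_gen n j = Fm n (swp j \<circ> \<pi>)"
        using IH(2) step_mat[OF inj rng j A B True] by metis
    qed
  next
    case False
    then have "B < A" using AB by simp
    have c: "Suc (card (invs n (swp j \<circ> \<pi>))) = card (invs n \<pi>)" by (rule invs_step(2)[OF inj A B \<open>B < A\<close>])
    show ?thesis unfolding wp length_append_singleton
    proof (intro conjI impI)
      show "card (invs n (swp j \<circ> \<pi>)) \<le> Suc (length w)" using IH(1) c by linarith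
      assume "card (invs n (swp j \<circ> \<pi>)) = Suc (length w)"
      then have False using c IH(1) by linarith
      then show "burau_word n (w @ [j]) = Fm n (swp j \<circ> \<pi>)" ..
    qed
  qed
qed



lemma psum_0[simp]: "psum p 0 = 0" by (simp add: psum_def)
lemma psum_Suc: "psum p (Suc i) = psum p i + p (Suc i)" by (simp add: psum_def)
lemma psum_mono: "i \<le> i' \<Longrightarrow> psum p i \<le> psum p i'"
  unfolding psum_def by (rule sum_mono2) auto
lemma psum_prev: "1 \<le> i \<Longrightarrow> psum p (i-1) + p i = psum p i"
  by (cases i) (auto simp: psum_Suc)

lemma least_block:
  assumes "1 \<le> i" "psum q (i-1) < k" "k \<le> psum q i"
  shows "(LEAST i'. k \<le> psum q i') = i"
proof (rule Least_equality)
  show "k \<le> psum q i" by fact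
  fix y assume y: "k \<le> psum q y"
  show "i \<le> y"
  proof (rule ccontr)
    assume "\<not> i \<le> y"
    then have "y \<le> i - 1" by simp
    then have "psum q y \<le> psum q (i-1)" by (rule psum_mono)
    then show False using y assms by simp
  qed
qed

lemma blk_uniq:
  assumes "i \<in> {1..r}" "j \<in> {1..r}" "1 \<le> u" "u \<le> q i" "1 \<le> v" "v \<le> q j"
    and eq: "psum q (i-1) + u = psum q (j-1) + v"
  shows "i = j \<and> u = v"
proof -
  have "\<not> i < j" if "i \<in> {1..r}" "j \<in> {1..r}" "1 \<le> u" "u \<le> q i" "1 \<le> v"
     "psum q (i-1) + u = psum q (j-1) + v" for i j u v
  proof
    assume "i < j"
    then have "psum q i \<le> psum q (j-1)" by (intro psum_mono) simp
    moreover have "psum q (i-1) + q i = psum q i" using that by (intro psum_prev) simp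
    ultimately show False using that by linarith
  qed
  then have "i = j" using assms by (metis linorder_neqE_nat)
  then show ?thesis using eq by simp
qed

lemma L1:
  assumes "i \<in> {1..r}" "1 \<le> u" "u \<le> q i"
  shows "lorenz_perm p q r (psum q (i-1) + u) = psum p i + psum q (i-1) + u"
proof -
  have a: "psum q (i-1) + u \<le> psum q i" using psum_prev[of i q] assms by simp
  also have "\<dots> \<le> psum q r" using assms by (intro psum_mono) simp
  finally have le: "psum q (i-1) + u \<le> psum q r" .
  have "(LEAST i'. psum q (i-1) + u \<le> psum q i') = i"
    using assms a by (intro least_block) auto
  then show ?thesis using le unfolding lorenz_perm_def Let_def by simp
qed

lemma L2:
  assumes "i \<in> {1..r}" "1 \<le> u" "u \<le> p i"
  shows "lorenz_perm p q r (psum q r + psum p (i-1) + u) = psum q (i-1) + psum p (i-1) + u"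
proof -
  have a: "psum p (i-1) + u \<le> psum p i" using psum_prev[of i p] assms by simp
  have "(LEAST i'. psum p (i-1) + u \<le> psum p i') = i"
    using assms a by (intro least_block) auto
  then show ?thesis using assms unfolding lorenz_perm_def Let_def by simp
qed

lemma L_monoq:
  assumes "a < b" "b \<le> psum q r"
  shows "lorenz_perm p q r a < lorenz_perm p q r b"
proof -
  have ex: "b \<le> psum q (LEAST i. b \<le> psum q i)" by (rule LeastI[of _ r]) fact
  have "(LEAST i. a \<le> psum q i) \<le> (LEAST i. b \<le> psum q i)"
    using ex assms by (intro Least_le) simp
  then have "psum p (LEAST i. a \<le> psum q i) \<le> psum p (LEAST i. b \<le> psum q i)" by (rule psum_mono)
  then show ?thesis using assms unfolding lorenz_perm_def Let_def by simp
qed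

lemma L_monop:
  assumes "psum q r < a" "a < b" "b \<le> psum p r + psum q r"
  shows "lorenz_perm p q r a < lorenz_perm p q r b"
proof -
  have ex: "b - psum q r \<le> psum p (LEAST i. b - psum q r \<le> psum p i)" by (rule LeastI[of _ r]) (use assms in simp)
  have "(LEAST i. a - psum q r \<le> psum p i) \<le> (LEAST i. b - psum q r \<le> psum p i)"
    using ex assms by (intro Least_le) simp
  then have "psum q ((LEAST i. a - psum q r \<le> psum p i) - 1) \<le> psum q ((LEAST i. b - psum q r \<le> psum p i) - 1)"
    by (intro psum_mono) simp
  then show ?thesis using assms unfolding lorenz_perm_def Let_def by (simp, arith)
qed


context
  fixes p q :: "nat \<Rightarrow> nat" and r n :: nat and \<pi> :: "nat \<Rightarrow> nat"
  assumes pos: "\<forall>i\<in>{1..r}. 0 < p i \<and> 0 < q i"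
    and nn: "n = psum p r + psum q r"
    and inj: "inj \<pi>"
    and agree: "\<forall>k\<in>{1..n}. \<pi> k = lorenz_perm p q r k"
begin

lemma qle: "i \<in> {1..r} \<Longrightarrow> u \<le> q i \<Longrightarrow> psum q (i-1) + u \<le> psum q i"
  using psum_prev[of i q] by simp

lemma qle2: "i \<in> {1..r} \<Longrightarrow> u \<le> q i \<Longrightarrow> psum q (i-1) + u \<le> psum q r"
  using qle[of i u] psum_mono[of i r q] by simp

lemma ple: "i \<in> {1..r} \<Longrightarrow> u \<le> p i \<Longrightarrow> psum p (i-1) + u \<le> psum p i"
  using psum_prev[of i p] by simp

lemma ple2: "i \<in> {1..r} \<Longrightarrow> u \<le> p i \<Longrightarrow> psum p (i-1) + u \<le> psum p r"
  using ple[of i u] psum_mono[of i r p] by simp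

lemma piq: "i \<in> {1..r} \<Longrightarrow> 1 \<le> u \<Longrightarrow> u \<le> q i \<Longrightarrow> \<pi> (psum q (i-1) + u) = psum p i + psum q (i-1) + u"
  using agree qle2[of i u] nn L1[of i r u q p] by auto

lemma pip: "i \<in> {1..r} \<Longrightarrow> 1 \<le> u \<Longrightarrow> u \<le> p i \<Longrightarrow> \<pi> (psum q r + psum p (i-1) + u) = psum q (i-1) + psum p (i-1) + u"
  using agree ple2[of i u] nn L2[of i r u p q] by auto

lemma monoq: "1 \<le> a \<Longrightarrow> a < b \<Longrightarrow> b \<le> psum q r \<Longrightarrow> \<pi> a < \<pi> b"
  using agree nn L_monoq[of a b q r p] by auto

lemma monop: "psum q r < a \<Longrightarrow> a < b \<Longrightarrow> b \<le> n \<Longrightarrow> \<pi> a < \<pi> b"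
  using agree nn L_monop[of q r a b p] by auto

lemma monop_le: "psum q r < a \<Longrightarrow> a \<le> b \<Longrightarrow> b \<le> n \<Longrightarrow> \<pi> a \<le> \<pi> b"
  using monop[of a b] by (cases "a = b") auto

lemma F1:
  assumes i: "i \<in> {1..r}" and j: "j \<in> {1..r}" and u: "1 \<le> u" "u \<le> q i" and v: "1 \<le> v" "v \<le> p j"
  shows "Eb n \<pi> (psum q (i-1) + u) (psum p (j-1) + psum q (j-1) + v)
     = (if j \<le> i then tt ^ psum p (j-1) * ((1 - tt) * tt ^ (v - 1)) else 0)"
proof -
  define a where "a = psum q (i-1) + u"
  define m0 where "m0 = psum q r + psum p (j-1) + v"
  have aQ: "a \<le> psum q r" unfolding a_def using qle2[OF i u(2)] .
  have m0n: "m0 \<le> n" unfolding m0_def nn using ple2[OF j v(2)] by simp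
  have m0r: "m0 \<in> {1..n}" using m0n v unfolding m0_def by simp
  have pim0: "\<pi> m0 = psum p (j-1) + psum q (j-1) + v" unfolding m0_def using pip[OF j v] by simp
  have pia: "\<pi> a = psum p i + psum q (i-1) + u" unfolding a_def using piq[OF i u] .
  have am0: "a < m0" using aQ v unfolding m0_def by simp
  have E: "Eb n \<pi> a (\<pi> m0) = (if a < m0 \<and> \<pi> m0 < \<pi> a then (1 - tt) * tt ^ cnt n \<pi> a (\<pi> m0) else 0)"
    using Eb_alt[OF inj m0r, of a] am0 by simp
  show ?thesis
  proof (cases "j \<le> i")
    case True
    have "psum p j \<le> psum p i" "psum q (j-1) \<le> psum q (i-1)" using True by (auto intro: psum_mono)
    moreover have "psum p (j-1) + v \<le> psum p j" using ple[OF j v(2)] .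
    ultimately have lt: "\<pi> m0 < \<pi> a" unfolding pim0 pia using u by linarith
    have S: "{m \<in> {1..n}. a < m \<and> \<pi> m < \<pi> m0} = {psum q r + 1..<m0}"
    proof (rule Set.set_eqI, rule iffI)
      fix m assume m: "m \<in> {m \<in> {1..n}. a < m \<and> \<pi> m < \<pi> m0}"
      have "psum q r < m"
      proof (rule ccontr)
        assume "\<not> psum q r < m"
        then have "\<pi> a < \<pi> m" using m monoq[of a m] u unfolding a_def by auto
        then show False using m lt by simp
      qed
      moreover have "m < m0"
      proof (rule ccontr)
        assume "\<not> m < m0"
        moreover have "psum q r < m0" using v unfolding m0_def by simp
        ultimately have "\<pi> m0 \<le> \<pi> m" using m monop_le[of m0 m] by auto
        then show False using m by simp
      qed
      ultimately show "m \<in> {psum q r + 1..<m0}" by simp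
    next
      fix m assume m: "m \<in> {psum q r + 1..<m0}"
      then show "m \<in> {m \<in> {1..n}. a < m \<and> \<pi> m < \<pi> m0}"
        using monop[of m m0] m0n aQ by auto
    qed
    have c: "cnt n \<pi> a (\<pi> m0) = psum p (j-1) + (v - 1)"
      unfolding cnt_def S using v by (simp add: m0_def)
    show ?thesis using E lt am0 c True unfolding a_def pim0
      by (simp add: power_add algebra_simps)
  next
    case False
    have "psum p i \<le> psum p (j-1)" "psum q i \<le> psum q (j-1)" using False by (auto intro: psum_mono)
    moreover have "psum q (i-1) + u \<le> psum q i" using qle[OF i u(2)] .
    ultimately have "\<not> \<pi> m0 < \<pi> a" unfolding pim0 pia using v by linarith
    then show ?thesis using E False unfolding a_def pim0 by simp
  qed
qed

lemma F2:
  assumes i: "i \<in> {1..r}" and j: "j \<in> {1..r}" and u: "1 \<le> u" "u \<le> q i" and v: "1 \<le> v" "v \<le> q j"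
  shows "Eb n \<pi> (psum q (i-1) + u) (psum p j + psum q (j-1) + v)
     = (if j = i \<and> u = v then tt ^ psum p i else 0)"
proof -
  define a where "a = psum q (i-1) + u"
  define a' where "a' = psum q (j-1) + v"
  have aQ: "a \<le> psum q r" unfolding a_def using qle2[OF i u(2)] .
  have a'Q: "a' \<le> psum q r" unfolding a'_def using qle2[OF j v(2)] .
  have Qn: "psum q r \<le> n" using nn by simp
  have a'r: "a' \<in> {1..n}" using a'Q Qn v unfolding a'_def by simp
  have pia': "\<pi> a' = psum p j + psum q (j-1) + v" unfolding a'_def using piq[OF j v] .
  have pia: "\<pi> a = psum p i + psum q (i-1) + u" unfolding a_def using piq[OF i u] .
  have E: "Eb n \<pi> a (\<pi> a') = (if a = a' then tt ^ cnt n \<pi> a (\<pi> a')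
     else if a < a' \<and> \<pi> a' < \<pi> a then (1 - tt) * tt ^ cnt n \<pi> a (\<pi> a') else 0)"
    using Eb_alt[OF inj a'r, of a] by simp
  show ?thesis
  proof (cases "j = i \<and> u = v")
    case True
    then have aa: "a = a'" unfolding a_def a'_def by simp
    have S: "{m \<in> {1..n}. a < m \<and> \<pi> m < \<pi> a} = {psum q r + 1..psum q r + psum p i}"
    proof (rule Set.set_eqI, rule iffI)
      fix m assume m: "m \<in> {m \<in> {1..n}. a < m \<and> \<pi> m < \<pi> a}"
      have "psum q r < m"
      proof (rule ccontr)
        assume "\<not> psum q r < m"
        then have "\<pi> a < \<pi> m" using m monoq[of a m] u unfolding a_def by auto
        then show False using m by simp
      qed
      moreover have "m \<le> psum q r + psum p i"
      proof (rule ccontr)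
        assume A: "\<not> m \<le> psum q r + psum p i"
        have "i \<noteq> r" using A m nn by auto
        then have i1: "i + 1 \<in> {1..r}" using i by auto
        have p1: "1 \<le> p (i+1)" using bspec[OF pos i1] by simp
        have "\<pi> (psum q r + psum p (i + 1 - 1) + 1) = psum q (i + 1 - 1) + psum p (i + 1 - 1) + 1"
          by (rule pip[OF i1 _ p1]) simp
        then have pm1: "\<pi> (psum q r + psum p i + 1) = psum q i + psum p i + 1" by simp
        have "\<pi> (psum q r + psum p i + 1) \<le> \<pi> m" using A m by (intro monop_le) auto
        moreover have "psum q (i-1) + u \<le> psum q i" using qle[OF i u(2)] .
        ultimately show False using m pm1 pia by simp
      qed
      ultimately show "m \<in> {psum q r + 1..psum q r + psum p i}" by simp
    next
      fix m assume m: "m \<in> {psum q r + 1..psum q r + psum p i}"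
      have pin: "psum p i \<le> psum p r" using i by (intro psum_mono) simp
      have pl: "1 \<le> p i" using bspec[OF pos i] by simp
      have "\<pi> (psum q r + psum p (i-1) + p i) = psum q (i-1) + psum p (i-1) + p i"
        by (rule pip[OF i pl]) simp
      then have pe: "\<pi> (psum q r + psum p i) = psum q (i-1) + psum p i"
        using psum_prev[of i p] i by (metis add.assoc atLeastAtMost_iff)
      have "\<pi> m \<le> \<pi> (psum q r + psum p i)" using m pin nn by (intro monop_le) auto
      then show "m \<in> {m \<in> {1..n}. a < m \<and> \<pi> m < \<pi> a}"
        using m pin nn aQ pe pia u by auto
    qed
    have c: "cnt n \<pi> a (\<pi> a) = psum p i" unfolding cnt_def S by simp
    show ?thesis using E aa c True unfolding a_def[symmetric] pia'[symmetric] by simp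
  next
    case False
    then have ne: "a \<noteq> a'" using blk_uniq[of i r j u q v] i j u v unfolding a_def a'_def by blast
    have nc: "\<not> (a < a' \<and> \<pi> a' < \<pi> a)" using monoq[of a a'] a'Q u unfolding a_def by auto
    have E0: "Eb n \<pi> a (\<pi> a') = 0" using E[unfolded if_not_P[OF ne] if_not_P[OF nc]] .
    then show ?thesis using False unfolding a_def pia' by auto
  qed
qed

lemma F3:
  assumes i: "i \<in> {1..r}" and j: "j \<in> {1..r}" and u: "1 \<le> u" "u \<le> p i" and v: "1 \<le> v" "v \<le> p j"
  shows "Eb n \<pi> (psum q r + psum p (i-1) + u) (psum p (j-1) + psum q (j-1) + v)
     = (if j = i \<and> u = v then 1 else 0)"
proof -
  define a where "a = psum q r + psum p (i-1) + u"
  define m0 where "m0 = psum q r + psum p (j-1) + v"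
  have an: "a \<le> n" unfolding a_def nn using ple2[OF i u(2)] by simp
  have m0n: "m0 \<le> n" unfolding m0_def nn using ple2[OF j v(2)] by simp
  have m0r: "m0 \<in> {1..n}" using m0n v unfolding m0_def by simp
  have pim0: "\<pi> m0 = psum p (j-1) + psum q (j-1) + v" unfolding m0_def using pip[OF j v] by simp
  have aQ: "psum q r < a" "psum q r < m0" using u v unfolding a_def m0_def by auto
  have E: "Eb n \<pi> a (\<pi> m0) = (if a = m0 then tt ^ cnt n \<pi> a (\<pi> m0)
     else if a < m0 \<and> \<pi> m0 < \<pi> a then (1 - tt) * tt ^ cnt n \<pi> a (\<pi> m0) else 0)"
    using Eb_alt[OF inj m0r, of a] by simp
  show ?thesis
  proof (cases "j = i \<and> u = v")
    case True
    then have aa: "a = m0" unfolding a_def m0_def by simp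
    have S: "{m \<in> {1..n}. a < m \<and> \<pi> m < \<pi> a} = {}"
      using monop[of a] aQ by fastforce
    have c: "cnt n \<pi> a (\<pi> a) = 0" unfolding cnt_def S by simp
    show ?thesis using E aa c True unfolding a_def[symmetric] pim0[symmetric] by simp
  next
    case False
    then have ne: "a \<noteq> m0" using blk_uniq[of i r j u p v] i j u v unfolding a_def m0_def by auto
    have nc: "\<not> (a < m0 \<and> \<pi> m0 < \<pi> a)" using monop[of a m0] aQ m0n by auto
    have E0: "Eb n \<pi> a (\<pi> m0) = 0" using E[unfolded if_not_P[OF ne] if_not_P[OF nc]] .
    then show ?thesis using False unfolding a_def pim0 by simp
  qed
qed

lemma F4:
  assumes i: "i \<in> {1..r}" and j: "j \<in> {1..r}" and u: "1 \<le> u" "u \<le> p i" and v: "1 \<le> v" "v \<le> q j"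
  shows "Eb n \<pi> (psum q r + psum p (i-1) + u) (psum p j + psum q (j-1) + v) = 0"
proof -
  define a where "a = psum q r + psum p (i-1) + u"
  define a' where "a' = psum q (j-1) + v"
  have a'Q: "a' \<le> psum q r" unfolding a'_def using qle2[OF j v(2)] .
  have Qn: "psum q r \<le> n" using nn by simp
  have a'r: "a' \<in> {1..n}" using a'Q Qn v unfolding a'_def by simp
  have pia': "\<pi> a' = psum p j + psum q (j-1) + v" unfolding a'_def using piq[OF j v] .
  have aQ: "psum q r < a" using u unfolding a_def by auto
  show ?thesis
    using Eb_alt[OF inj a'r, of a] aQ a'Q unfolding a_def[symmetric] pia'[symmetric] by simp
qed

end



theorem theorem6p10:
  fixes p q :: "nat \<Rightarrow> nat" and r :: nat and w :: "nat list"
  assumes "r \<ge> 1"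
    and "\<forall>i\<in>{1..r}. 0 < p i \<and> 0 < q i"
    and "is_lorenz_word p q r w"
  defines "n \<equiv> psum p r + psum q r"
  shows "burau_word n w \<in> carrier_mat n n \<and>
    (\<forall>i\<in>{1..r}. \<forall>j\<in>{1..r}. \<forall>u\<in>{1..q i}. \<forall>v\<in>{1..p j}.
       burau_word n w $$ (psum q (i-1) + u - 1, psum p (j-1) + psum q (j-1) + v - 1)
         = (if j \<le> i then tt ^ psum p (j-1) * ((1 - tt) * tt ^ (v - 1)) else 0)) \<and>
    (\<forall>i\<in>{1..r}. \<forall>j\<in>{1..r}. \<forall>u\<in>{1..q i}. \<forall>v\<in>{1..q j}.
       burau_word n w $$ (psum q (i-1) + u - 1, psum p j + psum q (j-1) + v - 1)
         = (if j = i \<and> u = v then tt ^ psum p i else 0)) \<and>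
    (\<forall>i\<in>{1..r}. \<forall>j\<in>{1..r}. \<forall>u\<in>{1..p i}. \<forall>v\<in>{1..p j}.
       burau_word n w $$ (psum q r + psum p (i-1) + u - 1, psum p (j-1) + psum q (j-1) + v - 1)
         = (if j = i \<and> u = v then 1 else 0)) \<and>
    (\<forall>i\<in>{1..r}. \<forall>j\<in>{1..r}. \<forall>u\<in>{1..p i}. \<forall>v\<in>{1..q j}.
       burau_word n w $$ (psum q r + psum p (i-1) + u - 1, psum p j + psum q (j-1) + v - 1) = 0)"
proof -
  define \<pi> where "\<pi> = word_perm w"
  have nn: "n = psum p r + psum q r" by (simp add: n_def)
  have lw: "\<forall>j\<in>set w. 1 \<le> j \<and> j < n" "\<forall>k\<in>{1..n}. \<pi> k = lorenz_perm p q r k"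
    "length w = card {(a, b). a \<in> {1..n} \<and> b \<in> {1..n} \<and> a < b \<and>
                                 lorenz_perm p q r b < lorenz_perm p q r a}"
    using assms(3) unfolding is_lorenz_word_def Let_def n_def \<pi>_def by auto
  have inv_eq: "invs n \<pi> = {(a, b). a \<in> {1..n} \<and> b \<in> {1..n} \<and> a < b \<and>
                                 lorenz_perm p q r b < lorenz_perm p q r a}"
    using lw(2) unfolding invs_def by auto
  have BW: "burau_word n w = Fm n \<pi>" using main_gen[OF lw(1)] inv_eq lw(3) unfolding \<pi>_def by auto
  have inj: "inj \<pi>" unfolding \<pi>_def by (rule word_perm_inj)
  note ctx = assms(2) nn inj lw(2)
  have ent: "burau_word n w $$ (x,y) = Eb n \<pi> (x+1) (y+1)" if "x < n" "y < n" for x y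
    using that by (simp add: BW Fm_def)
  have Pn: "psum p j + psum q (j-1) + v \<le> n" if "j \<in> {1..r}" "v \<le> q j" for j v
    using qle2[OF ctx that] psum_mono[of j r p] that nn by simp
  have Qn: "psum p (j-1) + psum q (j-1) + v \<le> n" if "j \<in> {1..r}" "v \<le> p j" for j v
  proof -
    have "j - 1 \<le> r" using that by auto
    then have "psum q (j-1) \<le> psum q r" by (rule psum_mono)
    then show ?thesis using ple2[OF ctx that] nn by simp
  qed
  have Rq: "psum q (i-1) + u \<le> n" if "i \<in> {1..r}" "u \<le> q i" for i u
    using qle2[OF ctx that] nn by simp
  have Rp: "psum q r + psum p (i-1) + u \<le> n" if "i \<in> {1..r}" "u \<le> p i" for i u
    using ple2[OF ctx that] nn by simp
  have gen: "burau_word n w $$ (X,Y) = Eb n \<pi> a b" if "X < n" "Y < n" "X + 1 = a" "Y + 1 = b" for X Y a b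
    using ent[OF that(1,2)] that(3,4) by simp
  show ?thesis
  proof (intro conjI ballI)
    show "burau_word n w \<in> carrier_mat n n" by (rule burau_word_carrier)
  next
    fix i j u v assume i: "i \<in> {1..r}" and j: "j \<in> {1..r}" and u: "u \<in> {1..q i}" and v: "v \<in> {1..p j}"
    have u1: "1 \<le> u" "u \<le> q i" and v1: "1 \<le> v" "v \<le> p j" using u v by auto
    have "burau_word n w $$ (psum q (i-1) + u - 1, psum p (j-1) + psum q (j-1) + v - 1)
       = Eb n \<pi> (psum q (i-1) + u) (psum p (j-1) + psum q (j-1) + v)"
      using Rq[OF i u1(2)] Qn[OF j v1(2)] u1 v1 by (intro gen) auto
    also have "\<dots> = (if j \<le> i then tt ^ psum p (j-1) * ((1 - tt) * tt ^ (v - 1)) else 0)"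
      by (rule F1[OF ctx i j u1 v1])
    finally show "burau_word n w $$ (psum q (i-1) + u - 1, psum p (j-1) + psum q (j-1) + v - 1)
         = (if j \<le> i then tt ^ psum p (j-1) * ((1 - tt) * tt ^ (v - 1)) else 0)" .
  next
    fix i j u v assume i: "i \<in> {1..r}" and j: "j \<in> {1..r}" and u: "u \<in> {1..q i}" and v: "v \<in> {1..q j}"
    have u1: "1 \<le> u" "u \<le> q i" and v1: "1 \<le> v" "v \<le> q j" using u v by auto
    have "burau_word n w $$ (psum q (i-1) + u - 1, psum p j + psum q (j-1) + v - 1)
       = Eb n \<pi> (psum q (i-1) + u) (psum p j + psum q (j-1) + v)"
      using Rq[OF i u1(2)] Pn[OF j v1(2)] u1 v1 by (intro gen) auto
    also have "\<dots> = (if j = i \<and> u = v then tt ^ psum p i else 0)"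
      by (rule F2[OF ctx i j u1 v1])
    finally show "burau_word n w $$ (psum q (i-1) + u - 1, psum p j + psum q (j-1) + v - 1)
         = (if j = i \<and> u = v then tt ^ psum p i else 0)" .
  next
    fix i j u v assume i: "i \<in> {1..r}" and j: "j \<in> {1..r}" and u: "u \<in> {1..p i}" and v: "v \<in> {1..p j}"
    have u1: "1 \<le> u" "u \<le> p i" and v1: "1 \<le> v" "v \<le> p j" using u v by auto
    have "burau_word n w $$ (psum q r + psum p (i-1) + u - 1, psum p (j-1) + psum q (j-1) + v - 1)
       = Eb n \<pi> (psum q r + psum p (i-1) + u) (psum p (j-1) + psum q (j-1) + v)"
      using Rp[OF i u1(2)] Qn[OF j v1(2)] u1 v1 by (intro gen) auto
    also have "\<dots> = (if j = i \<and> u = v then 1 else 0)"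
      by (rule F3[OF ctx i j u1 v1])
    finally show "burau_word n w $$ (psum q r + psum p (i-1) + u - 1, psum p (j-1) + psum q (j-1) + v - 1)
         = (if j = i \<and> u = v then 1 else 0)" .
  next
    fix i j u v assume i: "i \<in> {1..r}" and j: "j \<in> {1..r}" and u: "u \<in> {1..p i}" and v: "v \<in> {1..q j}"
    have u1: "1 \<le> u" "u \<le> p i" and v1: "1 \<le> v" "v \<le> q j" using u v by auto
    have "burau_word n w $$ (psum q r + psum p (i-1) + u - 1, psum p j + psum q (j-1) + v - 1)
       = Eb n \<pi> (psum q r + psum p (i-1) + u) (psum p j + psum q (j-1) + v)"
      using Rp[OF i u1(2)] Pn[OF j v1(2)] u1 v1 by (intro gen) auto
    also have "\<dots> = 0"
      by (rule F4[OF ctx i j u1 v1])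
    finally show "burau_word n w $$ (psum q r + psum p (i-1) + u - 1, psum p j + psum q (j-1) + v - 1) = 0" .
  qed
qed

end
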